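(* Let $\mathscr{H}$ be a real Hilbert space and let $\mathcal{V}=\{v_n\}_{n=0}^\infty\subset\mathscr{H}$ be a sequence without positive relations such that $\mathcal{C}[[\mathcal{V}]]$ is closed. For $S\subset\mathbb{N}$ let \[ \mathscr{H}(\mathcal{V},S)=\Big\{w\in\mathscr{H} : P_{\mathcal{C}[[\mathcal{V}]]}(w)=\sum_{n\in S}a_nv_n\ \text{with } a_n>0\text{ for all }n\in S\Big\}. \] Then $\mathscr{H}=\bigsqcup_{S\subset\mathbb{N}}\mathscr{H}(\mathcal{V},S)$ (a disjoint union). Moreover, for every $S\subset\mathbb{N}$, the set $\{0\}\cup\mathscr{H}(\mathcal{V},S)$ is a convex cone, and for all $\lambda_1,\lambda_2>0$ and all $w_1,w_2\in\mathscr{H}(\mathcal{V},S)$, \[ P_{\mathcal{C}[[\mathcal{V}]]}(\lambda_1w_1+\lambda_2w_2)=\lambda_1P_{\mathcal{C}[[\mathcal{V}]]}(w_1)+\lambda_2P_{\mathcal{C}[[\mathcal{V}]]}(w_2). \]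
   Context: $\mathbb{N}=\{0,1,2,\dots\}$. $\mathcal{C}[[\mathcal{V}]]=\{\sum_{n=0}^\infty a_n v_n : a_n\ge 0,\ \text{the series converges in }\mathscr{H}\}$ (convergence of partial sums). For $S\subset\mathbb{N}$, $\sum_{n\in S}a_nv_n$ means $\lim_{N\to\infty}\sum_{n\in S,\,n\le N}a_nv_n$, and the empty sum is $0$. A sequence has no positive relations if $\sum a_nv_n=\sum b_nv_n$ for convergent series with $a_n,b_n\ge0$ implies $a_n=b_n$ for all $n$. $P_K$ denotes the metric projection onto a closed convex set $K$ (the unique nearest point). *)

theory Defs
  imports "HOL-Analysis.Analysis"
begin

definition series_cone :: "(nat \<Rightarrow> 'a::real_normed_vector) \<Rightarrow> 'a set" where
  "series_cone V = {w. \<exists>a. (\<forall>n. a n \<ge> 0) \<and> (\<lambda>n. a n *\<^sub>R V n) sums w}"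

definition no_positive_relations :: "(nat \<Rightarrow> 'a::real_normed_vector) \<Rightarrow> bool" where
  "no_positive_relations V \<longleftrightarrow>
     (\<forall>a b w. (\<forall>n. a n \<ge> 0) \<longrightarrow> (\<forall>n. b n \<ge> 0) \<longrightarrow>
        (\<lambda>n. a n *\<^sub>R V n) sums w \<longrightarrow> (\<lambda>n. b n *\<^sub>R V n) sums w \<longrightarrow> (\<forall>n. a n = b n))"

definition metric_proj :: "'a::metric_space set \<Rightarrow> 'a \<Rightarrow> 'a" where
  "metric_proj K w = (THE p. p \<in> K \<and> (\<forall>q\<in>K. dist w p \<le> dist w q))"

definition face_region :: "(nat \<Rightarrow> 'a::real_normed_vector) \<Rightarrow> nat set \<Rightarrow> 'a set" where
  "face_region V S = {w. \<exists>a. (\<forall>n\<in>S. a n > 0) \<and>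
      (\<lambda>n. if n \<in> S then a n *\<^sub>R V n else 0) sums metric_proj (series_cone V) w}"

end

theory Submission
  imports Defs
begin

lemma parallelogram:
  fixes x y :: "'a::real_inner"
  shows "norm (x + y)^2 + norm (x - y)^2 = 2 * norm x ^2 + 2 * norm y ^2"
  by (simp add: power2_norm_eq_inner inner_add_left inner_add_right inner_diff_left inner_diff_right inner_commute)

lemma midpoint_dist:
  fixes w p q :: "'a::real_inner"
  shows "norm (w - (1/2) *\<^sub>R (p + q))^2 = (norm (w - p)^2 + norm (w - q)^2)/2 - norm (p - q)^2 / 4"
proof -
  have "norm ((w - p) + (w - q))^2 + norm ((w - p) - (w - q))^2 = 2 * norm (w-p)^2 + 2 * norm (w-q)^2"
    by (rule parallelogram)
  moreover have "(w - p) + (w - q) = 2 *\<^sub>R (w - (1/2) *\<^sub>R (p + q))"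
    by (simp add: algebra_simps scaleR_2)
  moreover have "(w - p) - (w - q) = q - p" by simp
  moreover have "norm (q - p) = norm (p - q)" by (rule norm_minus_commute)
  ultimately have h: "4 * norm (w - (1/2) *\<^sub>R (p + q))^2 + norm (p - q)^2 = 2 * norm (w-p)^2 + 2 * norm (w-q)^2"
    by (simp add: power_mult_distrib)
  show ?thesis using h by (simp add: field_simps)
qed

lemma nearest_unique:
  fixes K :: "'a::real_inner set"
  assumes "convex K" "p \<in> K" "p' \<in> K"
    and "\<forall>q\<in>K. dist w p \<le> dist w q" "\<forall>q\<in>K. dist w p' \<le> dist w q"
  shows "p = p'"
proof (rule ccontr)
  assume ne: "p \<noteq> p'"
  define m where "m = (1/2) *\<^sub>R (p + p')"
  have mK: "m \<in> K" using convexD[OF assms(1) assms(2) assms(3), of "1/2" "1/2"] unfolding m_def by (simp add: scaleR_add_right)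
  have e: "dist w p = dist w p'" using assms by (meson order_antisym)
  have "norm (w - m)^2 = norm (w - p)^2 - norm (p - p')^2 / 4"
    using midpoint_dist[of w p p'] e unfolding m_def dist_norm by simp
  also have "\<dots> < norm (w - p)^2" using ne by simp
  finally have "norm (w - m) < norm (w - p)" by (simp add: power_less_imp_less_base)
  with assms(4) mK show False by (simp add: dist_norm) (meson not_le)
qed

lemma metric_proj_eq:
  fixes K :: "'a::real_inner set"
  assumes "convex K" "p \<in> K" "\<forall>q\<in>K. dist w p \<le> dist w q"
  shows "metric_proj K w = p"
  unfolding metric_proj_def
  using assms nearest_unique[OF assms(1)] by (intro the_equality) blast+

lemma lin_aux: "(x::real)/4 \<le> (a + b)/2 - c \<Longrightarrow> a \<le> p \<Longrightarrow> b \<le> q \<Longrightarrow> x \<le> 2*p + 2*q - 4*c"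
  by argo

lemma nearest_exists:
  fixes K :: "'a::{real_inner,complete_space} set"
  assumes "closed K" "convex K" "K \<noteq> {}"
  shows "\<exists>p\<in>K. \<forall>q\<in>K. dist w p \<le> dist w q"
proof -
  define d where "d = Inf (dist w ` K)"
  have bdd: "bdd_below (dist w ` K)" by (rule bdd_belowI[where m=0]) auto
  have dle: "\<And>q. q \<in> K \<Longrightarrow> d \<le> dist w q" unfolding d_def using bdd by (simp add: cInf_lower)
  have d0: "d \<ge> 0" unfolding d_def by (rule cInf_greatest) (auto simp: assms)
  have "\<forall>n. \<exists>q. q \<in> K \<and> dist w q < d + 1 / (real n + 1)"
  proof
    fix n
    have "Inf (dist w ` K) < d + 1 / (real n + 1)" unfolding d_def by simp
    from cInf_lessD[OF _ this] assms(3)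
    show "\<exists>q. q \<in> K \<and> dist w q < d + 1 / (real n + 1)" by auto
  qed
  from choice[OF this] obtain q where qq: "\<forall>n. q n \<in> K \<and> dist w (q n) < d + 1 / (real n + 1)"
    by blast
  have qK: "\<And>n. q n \<in> K" and qd: "\<And>n. dist w (q n) < d + 1 / (real n + 1)" using qq by auto
  define eps where "eps n = 1 / (real n + 1)" for n
  have eps_pos: "\<And>n. eps n > 0" "\<And>n. eps n \<le> 1" unfolding eps_def by auto
  have key: "norm (q n - q m)^2 \<le> (4*d+2) * (eps n + eps m)" for n m
  proof -
    have mK: "(1/2) *\<^sub>R (q n + q m) \<in> K"
      using convexD[OF assms(2) qK qK, of "1/2" "1/2"] by (simp add: scaleR_add_right)
    have "d \<le> norm (w - (1/2) *\<^sub>R (q n + q m))" using dle[OF mK] by (simp add: dist_norm)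
    hence d2: "d^2 \<le> norm (w - (1/2) *\<^sub>R (q n + q m))^2" using d0 by (simp add: power_mono)
    have a: "norm (w - q n) < d + eps n" "norm (w - q m) < d + eps m"
      using qd unfolding eps_def dist_norm by auto
    have a2: "norm (w - q n)^2 \<le> (d + eps n)^2" "norm (w - q m)^2 \<le> (d + eps m)^2"
      using a by (auto intro!: power_mono)
    have "norm (q n - q m)^2 / 4 \<le> (norm (w - q n)^2 + norm (w - q m)^2)/2 - d^2"
      using midpoint_dist[of w "q n" "q m"] d2 by linarith
    hence "norm (q n - q m)^2 \<le> 2*(d + eps n)^2 + 2*(d + eps m)^2 - 4*d^2" using lin_aux a2 by blast
    also have "\<dots> = 4*d*(eps n + eps m) + 2*(eps n * eps n) + 2*(eps m * eps m)"
      by (simp add: power2_eq_square algebra_simps)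
    also have "\<dots> \<le> 4*d*(eps n + eps m) + 2*eps n + 2*eps m"
      using mult_right_le_one_le[of "eps n" "eps n"] mult_right_le_one_le[of "eps m" "eps m"] eps_pos[of n] eps_pos[of m]
      by linarith
    finally show ?thesis by (simp add: algebra_simps)
  qed
  have "Cauchy q"
  proof (rule metric_CauchyI)
    fix e :: real assume e: "e > 0"
    define \<delta> where "\<delta> = e^2 / (2*(4*d+2))"
    have dpos: "\<delta> > 0" unfolding \<delta>_def using e d0 by auto
    obtain M :: nat where M: "1 / (real M + 1) < \<delta>"
      using reals_Archimedean[OF dpos] by (auto simp: inverse_eq_divide add.commute)
    show "\<exists>M. \<forall>m\<ge>M. \<forall>n\<ge>M. dist (q m) (q n) < e"
    proof (intro exI allI impI)
      fix m n assume mn: "M \<le> m" "M \<le> n"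
      have "eps m \<le> 1 / (real M + 1)" "eps n \<le> 1 / (real M + 1)"
        unfolding eps_def using mn by (auto intro!: divide_left_mono)
      hence "eps m + eps n < 2 * \<delta>" using M by linarith
      hence "(4*d+2) * (eps m + eps n) < (4*d+2) * (2*\<delta>)" using d0 by simp
      also have "\<dots> = e^2" proof -
        have "4*d+2 > 0" using d0 by simp
        thus ?thesis unfolding \<delta>_def by (simp add: field_simps)
      qed
      finally have "norm (q m - q n)^2 < e^2" using key[of m n] by linarith
      thus "dist (q m) (q n) < e" using e by (simp add: dist_norm power_less_imp_less_base)
    qed
  qed
  then obtain p where lim: "q \<longlonglongrightarrow> p" using Cauchy_convergent convergent_def by blast
  have pK: "p \<in> K" using closed_sequentially[OF assms(1)] qK lim by blast
  have l1: "(\<lambda>n. dist w (q n)) \<longlonglongrightarrow> dist w p" using lim by (intro tendsto_intros)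
  have l2: "(\<lambda>n. d + 1 / (real n + 1)) \<longlonglongrightarrow> d"
    using LIMSEQ_inverse_real_of_nat_add[of d] by (simp add: inverse_eq_divide add.commute)
  have "dist w p \<le> d"
  proof (rule LIMSEQ_le[OF l1 l2])
    show "\<exists>N. \<forall>n\<ge>N. dist w (q n) \<le> d + 1 / (real n + 1)" using qd less_imp_le by blast
  qed
  thus ?thesis using pK dle by (meson order_trans)
qed


lemma norm_diff_scale_sq:
  fixes x u :: "'a::real_inner"
  shows "norm (x - t *\<^sub>R u)^2 = norm x^2 - 2 * t * inner x u + t^2 * norm u^2"
proof -
  have "norm (x - t *\<^sub>R u)^2 = inner (x - t *\<^sub>R u) (x - t *\<^sub>R u)" by (rule power2_norm_eq_inner)
  also have "\<dots> = inner x x - 2 * t * inner x u + t^2 * inner u u"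
    by (simp add: inner_diff_left inner_diff_right inner_commute power2_eq_square algebra_simps)
  finally show ?thesis by (simp add: power2_norm_eq_inner)
qed

lemma first_order:
  fixes K :: "'a::real_inner set"
  assumes near: "\<forall>q\<in>K. dist w p \<le> dist w q" and e: "e > 0"
    and dir: "\<And>t. 0 < t \<Longrightarrow> t < e \<Longrightarrow> p + t *\<^sub>R u \<in> K"
  shows "inner (w - p) u \<le> 0"
proof (rule ccontr)
  define c where "c = inner (w - p) u"
  assume "\<not> inner (w - p) u \<le> 0"
  hence c: "c > 0" unfolding c_def by simp
  have ineq: "2 * c \<le> t * norm u^2" if t: "0 < t" "t < e" for t
  proof -
    have "dist w p \<le> dist w (p + t *\<^sub>R u)" using near dir[OF t] by blast
    hence "norm (w - p) \<le> norm ((w - p) - t *\<^sub>R u)" by (simp add: dist_norm algebra_simps)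
    hence "norm (w - p)^2 \<le> norm ((w - p) - t *\<^sub>R u)^2" by (simp add: power_mono)
    hence "0 \<le> - 2 * t * c + t^2 * norm u^2" unfolding norm_diff_scale_sq c_def by simp
    hence "t * (2 * c) \<le> t * (t * norm u^2)" by (simp add: power2_eq_square algebra_simps)
    thus ?thesis using t by simp
  qed
  define t where "t = min (e/2) (c / (norm u^2 + 1))"
  have "c / (norm u^2 + 1) > 0" using c by (simp add: add_nonneg_pos)
  hence t0: "0 < t" "t < e" unfolding t_def using e by auto
  have "t * norm u^2 \<le> c / (norm u^2 + 1) * norm u^2" unfolding t_def
    by (intro mult_right_mono) auto
  also have "\<dots> < c"
  proof -
    have d: "norm u^2 + 1 > 0" by (simp add: add_nonneg_pos)
    have "c * norm u^2 < c * (norm u^2 + 1)" using c by simp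
    hence "(c * norm u^2) / (norm u^2 + 1) < c" by (simp add: pos_divide_less_eq[OF d])
    thus ?thesis by simp
  qed
  finally show False using ineq[OF t0] c by linarith
qed

lemma sc_zero: "0 \<in> series_cone V"
  unfolding series_cone_def by (auto intro!: exI[of _ "\<lambda>_. 0"])

lemma sc_add: "x \<in> series_cone V \<Longrightarrow> y \<in> series_cone V \<Longrightarrow> x + y \<in> series_cone V"
  unfolding series_cone_def
proof safe
  fix a b assume "\<forall>n. 0 \<le> a n" "(\<lambda>n. a n *\<^sub>R V n) sums x" "\<forall>n. 0 \<le> b n" "(\<lambda>n. b n *\<^sub>R V n) sums y"
  thus "\<exists>c. (\<forall>n. 0 \<le> c n) \<and> (\<lambda>n. c n *\<^sub>R V n) sums (x + y)"
    by (intro exI[of _ "\<lambda>n. a n + b n"]) (auto simp: scaleR_add_left intro: sums_add)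
qed

lemma sc_scale: "x \<in> series_cone V \<Longrightarrow> c \<ge> 0 \<Longrightarrow> c *\<^sub>R x \<in> series_cone V"
  unfolding series_cone_def
proof safe
  fix a assume "\<forall>n. 0 \<le> a n" "(\<lambda>n. a n *\<^sub>R V n) sums x" "c \<ge> 0"
  moreover have "(\<lambda>n. c *\<^sub>R (a n *\<^sub>R V n)) sums (c *\<^sub>R x)" using calculation(2) by (rule sums_scaleR_right)
  ultimately show "\<exists>b. (\<forall>n. 0 \<le> b n) \<and> (\<lambda>n. b n *\<^sub>R V n) sums (c *\<^sub>R x)"
    by (intro exI[of _ "\<lambda>n. c * a n"]) auto
qed

lemma sc_convex: "convex (series_cone V)"
proof -
  have "convex_cone (series_cone V)" unfolding convex_cone_iff
    using sc_zero sc_add sc_scale by blast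
  thus ?thesis by (simp add: convex_cone_def)
qed

lemma sc_shift:
  assumes "(\<lambda>k. a k *\<^sub>R V k) sums p" "\<forall>k. a k \<ge> 0" "a n + t \<ge> 0"
  shows "p + t *\<^sub>R V n \<in> series_cone V"
proof -
  have s1: "(\<lambda>k. if k = n then t *\<^sub>R V k else 0) sums (t *\<^sub>R V n)" by (rule sums_single)
  have eq: "(\<lambda>k. (a k + (if k = n then t else 0)) *\<^sub>R V k) = (\<lambda>k. a k *\<^sub>R V k + (if k = n then t *\<^sub>R V k else 0))"
    by (auto simp: fun_eq_iff scaleR_add_left)
  have "(\<lambda>k. (a k + (if k = n then t else 0)) *\<^sub>R V k) sums (p + t *\<^sub>R V n)"
    unfolding eq by (rule sums_add[OF assms(1) s1])
  thus ?thesis unfolding series_cone_def using assms(2,3)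
    by (intro CollectI exI[of _ "\<lambda>k. a k + (if k = n then t else 0)"]) auto
qed

lemma inner_series_zero:
  fixes V :: "nat \<Rightarrow> 'a::real_inner"
  assumes "(\<lambda>k. b k *\<^sub>R V k) sums q" "\<And>k. b k \<noteq> 0 \<Longrightarrow> inner x (V k) = 0"
  shows "inner x q = 0"
proof -
  have "(\<lambda>k. inner x (b k *\<^sub>R V k)) sums inner x q"
    by (rule bounded_linear.sums[OF bounded_linear_inner_right assms(1)])
  moreover have "(\<lambda>k. inner x (b k *\<^sub>R V k)) = (\<lambda>k. 0)"
    using assms(2) by (auto simp: fun_eq_iff)
  ultimately show ?thesis using sums_unique2 sums_zero by metis
qed

lemma proj_basic:
  fixes V :: "nat \<Rightarrow> 'a::{real_inner,complete_space}"
  assumes cl: "closed (series_cone V)"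
  shows "metric_proj (series_cone V) w \<in> series_cone V"
    and "\<forall>q\<in>series_cone V. dist w (metric_proj (series_cone V) w) \<le> dist w q"
proof -
  obtain p where p: "p \<in> series_cone V" "\<forall>q\<in>series_cone V. dist w p \<le> dist w q"
    using nearest_exists[OF cl sc_convex] sc_zero by blast
  have "metric_proj (series_cone V) w = p" by (rule metric_proj_eq[OF sc_convex p])
  thus "metric_proj (series_cone V) w \<in> series_cone V"
    "\<forall>q\<in>series_cone V. dist w (metric_proj (series_cone V) w) \<le> dist w q" using p by auto
qed

lemma proj_ineq:
  fixes V :: "nat \<Rightarrow> 'a::{real_inner,complete_space}" and w :: 'a
  assumes cl: "closed (series_cone V)"
  defines "p \<equiv> metric_proj (series_cone V) w"
  shows "\<And>q. q \<in> series_cone V \<Longrightarrow> inner (w - p) q \<le> 0"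
    and "inner (w - p) p = 0"
proof -
  note pb = proj_basic[OF cl, of w, folded p_def]
  show le: "inner (w - p) q \<le> 0" if q: "q \<in> series_cone V" for q
    by (rule first_order[OF pb(2) zero_less_one]) (intro sc_add pb(1) sc_scale q, simp)
  have "inner (w - p) (-p) \<le> 0"
  proof (rule first_order[OF pb(2) zero_less_one])
    fix t :: real assume "0 < t" "t < 1"
    hence "(1 - t) *\<^sub>R p \<in> series_cone V" by (intro sc_scale pb(1)) simp
    thus "p + t *\<^sub>R - p \<in> series_cone V" by (simp add: algebra_simps)
  qed
  moreover have "inner (w - p) p \<le> 0" by (rule le[OF pb(1)])
  ultimately show "inner (w - p) p = 0" by simp
qed

lemma proj_char:
  fixes V :: "nat \<Rightarrow> 'a::{real_inner,complete_space}"
  assumes "p \<in> series_cone V" "inner (w - p) p = 0" "\<And>q. q \<in> series_cone V \<Longrightarrow> inner (w - p) q \<le> 0"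
  shows "metric_proj (series_cone V) w = p"
proof (rule metric_proj_eq[OF sc_convex assms(1)], intro ballI)
  fix q assume q: "q \<in> series_cone V"
  have "norm (w - q)^2 = norm ((w - p) - (q - p))^2" by simp
  also have "\<dots> = norm (w - p)^2 - 2 * inner (w - p) (q - p) + norm (q - p)^2"
    using norm_diff_scale_sq[of "w - p" 1 "q - p"] by simp
  also have "inner (w - p) (q - p) = inner (w - p) q" using assms(2) by (simp add: inner_diff_right)
  finally have "norm (w - p)^2 \<le> norm (w - q)^2" using assms(3)[OF q] zero_le_power2[of "norm (q - p)"] by linarith
  thus "dist w p \<le> dist w q" by (simp add: dist_norm power2_le_iff_abs_le)
qed


lemma face_iff:
  "w \<in> face_region V S \<longleftrightarrow> (\<exists>a. (\<forall>n. a n \<ge> 0) \<and> (\<forall>n. n \<in> S \<longleftrightarrow> 0 < a n)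
      \<and> (\<lambda>n. a n *\<^sub>R V n) sums metric_proj (series_cone V) w)"
proof
  assume "w \<in> face_region V S"
  then obtain a where a: "\<forall>n\<in>S. a n > 0"
    "(\<lambda>n. if n \<in> S then a n *\<^sub>R V n else 0) sums metric_proj (series_cone V) w"
    unfolding face_region_def by blast
  define b where "b n = (if n \<in> S then a n else 0)" for n
  have "(\<lambda>n. b n *\<^sub>R V n) = (\<lambda>n. if n \<in> S then a n *\<^sub>R V n else 0)"
    unfolding b_def by (auto simp: fun_eq_iff)
  thus "\<exists>a. (\<forall>n. a n \<ge> 0) \<and> (\<forall>n. n \<in> S \<longleftrightarrow> 0 < a n)
      \<and> (\<lambda>n. a n *\<^sub>R V n) sums metric_proj (series_cone V) w"
    using a by (intro exI[of _ b]) (auto simp: b_def less_imp_le)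
next
  assume "\<exists>a. (\<forall>n. a n \<ge> 0) \<and> (\<forall>n. n \<in> S \<longleftrightarrow> 0 < a n)
      \<and> (\<lambda>n. a n *\<^sub>R V n) sums metric_proj (series_cone V) w"
  then obtain a where a: "\<forall>n. a n \<ge> 0" "\<forall>n. n \<in> S \<longleftrightarrow> 0 < a n"
    "(\<lambda>n. a n *\<^sub>R V n) sums metric_proj (series_cone V) w" by blast
  have "(\<lambda>n. if n \<in> S then a n *\<^sub>R V n else 0) = (\<lambda>n. a n *\<^sub>R V n)"
  proof
    fix n show "(if n \<in> S then a n *\<^sub>R V n else 0) = a n *\<^sub>R V n"
    proof (cases "n \<in> S")
      case False
      hence "a n = 0" using a(1,2) by (meson antisym not_less)
      thus ?thesis using False by simp
    qed simp
  qed
  thus "w \<in> face_region V S" unfolding face_region_def using a by auto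
qed

lemma face_orth:
  fixes V :: "nat \<Rightarrow> 'a::{real_inner,complete_space}"
  assumes cl: "closed (series_cone V)"
    and a: "\<forall>n. a n \<ge> 0" "(\<lambda>n. a n *\<^sub>R V n) sums metric_proj (series_cone V) w" and n: "a n > 0"
  shows "inner (w - metric_proj (series_cone V) w) (V n) = 0"
proof -
  let ?p = "metric_proj (series_cone V) w"
  note pb = proj_basic[OF cl, of w]
  have "inner (w - ?p) (V n) \<le> 0"
    by (rule first_order[OF pb(2) zero_less_one]) (rule sc_shift[OF a(2) a(1)], use n in simp)
  moreover have "inner (w - ?p) (- V n) \<le> 0"
  proof (rule first_order[OF pb(2) n])
    fix t :: real assume "0 < t" "t < a n"
    hence "?p + (-t) *\<^sub>R V n \<in> series_cone V" by (intro sc_shift[OF a(2) a(1)]) simp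
    thus "?p + t *\<^sub>R - V n \<in> series_cone V" by simp
  qed
  ultimately show ?thesis by simp
qed

lemma face_add:
  fixes V :: "nat \<Rightarrow> 'a::{real_inner,complete_space}"
  assumes cl: "closed (series_cone V)"
    and w1: "w1 \<in> face_region V S" and w2: "w2 \<in> face_region V S"
  shows "metric_proj (series_cone V) (w1 + w2) = metric_proj (series_cone V) w1 + metric_proj (series_cone V) w2"
    and "w1 + w2 \<in> face_region V S"
proof -
  let ?P = "metric_proj (series_cone V)"
  obtain a where a: "\<forall>n. a n \<ge> 0" "\<forall>n. n \<in> S \<longleftrightarrow> 0 < a n" "(\<lambda>n. a n *\<^sub>R V n) sums ?P w1"
    using w1 unfolding face_iff by blast
  obtain b where b: "\<forall>n. b n \<ge> 0" "\<forall>n. n \<in> S \<longleftrightarrow> 0 < b n" "(\<lambda>n. b n *\<^sub>R V n) sums ?P w2"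
    using w2 unfolding face_iff by blast
  have c1: "inner (w1 - ?P w1) (?P w2) = 0"
  proof (rule inner_series_zero[OF b(3)])
    fix k assume "b k \<noteq> 0"
    hence "a k > 0" using a(2) b(1,2) by (metis order.not_eq_order_implies_strict)
    thus "inner (w1 - ?P w1) (V k) = 0" by (rule face_orth[OF cl a(1) a(3)])
  qed
  have c2: "inner (w2 - ?P w2) (?P w1) = 0"
  proof (rule inner_series_zero[OF a(3)])
    fix k assume "a k \<noteq> 0"
    hence "b k > 0" using b(2) a(1,2) by (metis order.not_eq_order_implies_strict)
    thus "inner (w2 - ?P w2) (V k) = 0" by (rule face_orth[OF cl b(1) b(3)])
  qed
  have s: "(\<lambda>n. (a n + b n) *\<^sub>R V n) sums (?P w1 + ?P w2)"
    using sums_add[OF a(3) b(3)] by (simp add: scaleR_add_left)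
  have e: "(w1 + w2) - (?P w1 + ?P w2) = (w1 - ?P w1) + (w2 - ?P w2)" by simp
  show eq: "?P (w1 + w2) = ?P w1 + ?P w2"
  proof (rule proj_char)
    show "?P w1 + ?P w2 \<in> series_cone V" by (intro sc_add proj_basic(1)[OF cl])
    show "inner (w1 + w2 - (?P w1 + ?P w2)) (?P w1 + ?P w2) = 0"
      unfolding e using c1 c2 proj_ineq(2)[OF cl, of w1] proj_ineq(2)[OF cl, of w2]
      by (simp add: inner_add_left inner_add_right)
    fix q assume q: "q \<in> series_cone V"
    show "inner (w1 + w2 - (?P w1 + ?P w2)) q \<le> 0"
      unfolding e using proj_ineq(1)[OF cl q, of w1] proj_ineq(1)[OF cl q, of w2]
      by (simp add: inner_add_left)
  qed
  show "w1 + w2 \<in> face_region V S" unfolding face_iff eq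
    using a b s by (intro exI[of _ "\<lambda>n. a n + b n"]) (auto simp: add_pos_nonneg)
qed

lemma face_scale:
  fixes V :: "nat \<Rightarrow> 'a::{real_inner,complete_space}"
  assumes cl: "closed (series_cone V)"
    and w: "w \<in> face_region V S" and l: "l > 0"
  shows "metric_proj (series_cone V) (l *\<^sub>R w) = l *\<^sub>R metric_proj (series_cone V) w"
    and "l *\<^sub>R w \<in> face_region V S"
proof -
  let ?P = "metric_proj (series_cone V)"
  obtain a where a: "\<forall>n. a n \<ge> 0" "\<forall>n. n \<in> S \<longleftrightarrow> 0 < a n" "(\<lambda>n. a n *\<^sub>R V n) sums ?P w"
    using w unfolding face_iff by blast
  have s: "(\<lambda>n. (l * a n) *\<^sub>R V n) sums (l *\<^sub>R ?P w)"
    using sums_scaleR_right[OF a(3), of l] by simp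
  have e: "l *\<^sub>R w - l *\<^sub>R ?P w = l *\<^sub>R (w - ?P w)" by (simp add: algebra_simps)
  show eq: "?P (l *\<^sub>R w) = l *\<^sub>R ?P w"
  proof (rule proj_char)
    show "l *\<^sub>R ?P w \<in> series_cone V" using l by (intro sc_scale proj_basic(1)[OF cl]) simp
    show "inner (l *\<^sub>R w - l *\<^sub>R ?P w) (l *\<^sub>R ?P w) = 0"
      unfolding e using proj_ineq(2)[OF cl, of w] by simp
    fix q assume q: "q \<in> series_cone V"
    show "inner (l *\<^sub>R w - l *\<^sub>R ?P w) q \<le> 0"
      unfolding e using proj_ineq(1)[OF cl q, of w] l by (simp add: mult_nonneg_nonpos)
  qed
  show "l *\<^sub>R w \<in> face_region V S" unfolding face_iff eq
    using a s l by (intro exI[of _ "\<lambda>n. l * a n"]) (auto simp: zero_less_mult_iff)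
qed

theorem corollary1p4:
  fixes V :: "nat \<Rightarrow> 'a::{real_inner, complete_space}"
  assumes "no_positive_relations V"
    and "closed (series_cone V)"
  shows "(\<Union>S. face_region V S) = UNIV
    \<and> (\<forall>S T. S \<noteq> T \<longrightarrow> face_region V S \<inter> face_region V T = {})
    \<and> (\<forall>S. convex_cone ({0} \<union> face_region V S))
    \<and> (\<forall>S l1 l2 w1 w2. l1 > 0 \<longrightarrow> l2 > 0 \<longrightarrow> w1 \<in> face_region V S \<longrightarrow> w2 \<in> face_region V S \<longrightarrow>
           metric_proj (series_cone V) (l1 *\<^sub>R w1 + l2 *\<^sub>R w2)
             = l1 *\<^sub>R metric_proj (series_cone V) w1 + l2 *\<^sub>R metric_proj (series_cone V) w2)"
proof (intro conjI allI impI)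
  note cl = assms(2)
  let ?P = "metric_proj (series_cone V)"
  show "(\<Union>S. face_region V S) = UNIV"
  proof (intro set_eqI iffI)
    fix w :: 'a
    have "?P w \<in> series_cone V" by (rule proj_basic(1)[OF cl])
    then obtain a where a: "\<forall>n. a n \<ge> 0" "(\<lambda>n. a n *\<^sub>R V n) sums ?P w"
      unfolding series_cone_def by blast
    have "w \<in> face_region V {n. a n > 0}" unfolding face_iff using a by blast
    thus "w \<in> (\<Union>S. face_region V S)" by blast
  qed simp
  show "face_region V S \<inter> face_region V T = {}" if "S \<noteq> T" for S T
  proof (rule ccontr)
    assume "face_region V S \<inter> face_region V T \<noteq> {}"
    then obtain w where "w \<in> face_region V S" "w \<in> face_region V T" by blast
    then obtain a b where a: "\<forall>n. a n \<ge> 0" "\<forall>n. n \<in> S \<longleftrightarrow> 0 < a n" "(\<lambda>n. a n *\<^sub>R V n) sums ?P w"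
      and b: "\<forall>n. b n \<ge> 0" "\<forall>n. n \<in> T \<longleftrightarrow> 0 < b n" "(\<lambda>n. b n *\<^sub>R V n) sums ?P w"
      unfolding face_iff by blast
    have "\<forall>n. a n = b n" using assms(1) a b unfolding no_positive_relations_def by blast
    hence "S = T" using a(2) b(2) by auto
    with that show False by simp
  qed
  show "convex_cone ({0} \<union> face_region V S)" for S
    unfolding convex_cone_iff
  proof (intro conjI ballI allI impI)
    show "0 \<in> {0} \<union> face_region V S" by simp
    fix x y assume x: "x \<in> {0} \<union> face_region V S" and y: "y \<in> {0} \<union> face_region V S"
    show "x + y \<in> {0} \<union> face_region V S"
      using x y face_add(2)[OF cl] by auto
  next
    fix x and c :: real assume x: "x \<in> {0} \<union> face_region V S" and c: "c \<ge> 0"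
    show "c *\<^sub>R x \<in> {0} \<union> face_region V S"
    proof (cases "c = 0")
      case False thus ?thesis using x c face_scale(2)[OF cl, of x S c] by auto
    qed simp
  qed
  fix S l1 l2 w1 w2
  assume l: "(0::real) < l1" "(0::real) < l2" and w: "w1 \<in> face_region V S" "w2 \<in> face_region V S"
  show "?P (l1 *\<^sub>R w1 + l2 *\<^sub>R w2) = l1 *\<^sub>R ?P w1 + l2 *\<^sub>R ?P w2"
    using face_add(1)[OF cl face_scale(2)[OF cl w(1) l(1)] face_scale(2)[OF cl w(2) l(2)]]
      face_scale(1)[OF cl w(1) l(1)] face_scale(1)[OF cl w(2) l(2)] by simp
qed

end
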